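(* Let $n\ge3$, $\mu_1,\mu_2,\beta>0$, $p=2q+1$ with $\frac{n}{n-2}<p<\frac{n+2}{n-2}$, let $(u,v)$ be a nonnegative radial solution of (S) and $\bar w_1,\bar w_2$ as in the context. Then $(\bar w_1,\bar w_2)$ solves $$\bar w_i''+\tau_0\bar w_i'-\sigma_0\bar w_i+\mu_i\bar w_i^{2q+1}+\beta\bar w_i^q\bar w_j^{q+1}=0\ \ (\{i,j\}=\{1,2\})\ \text{on }\mathbb{R},$$ the function $\bar\Psi(t)$ is nondecreasing and uniformly bounded on $\mathbb{R}$, and $$\frac{d}{dt}\bar\Psi(t)=-\tau_0\big[(\bar w_1')^2+(\bar w_2')^2\big](t).$$
   Context: System (S): $-\Delta u=\mu_1u^{2q+1}+\beta u^qv^{q+1}$, $-\Delta v=\mu_2v^{2q+1}+\beta v^qu^{q+1}$ in $\mathbb{R}^n\setminus\{0\}$; nonnegative solutions are $C^2(\mathbb{R}^n\setminus\{0\})$ pairs with $u,v\ge0$. $\bar u(x)=|x|^{2-n}u(x/|x|^2)$, $\bar v(x)=|x|^{2-n}v(x/|x|^2)$, $\alpha=p(n-2)-(n+2)$, $\delta_0=\frac{2+\alpha}{p-1}$, $\bar w_1(t)=e^{-\delta_0t}\bar u(e^{-t})$, $\bar w_2(t)=e^{-\delta_0t}\bar v(e^{-t})$, $\tau_0=\frac{n-2}{p-1}\big(\frac{n+2+2\alpha}{n-2}-p\big)<0$, $\sigma_0=\frac{(2+\alpha)(n-2)}{(p-1)^2}\big(p-\frac{n+\alpha}{n-2}\big)>0$,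 and $$\bar\Psi(t)=\tfrac12\big(|\bar w_1'|^2+|\bar w_2'|^2-\sigma_0(\bar w_1^2+\bar w_2^2)\big)+\tfrac1{p+1}\big(\mu_1\bar w_1^{p+1}+2\beta\bar w_1^{q+1}\bar w_2^{q+1}+\mu_2\bar w_2^{p+1}\big).$$ *)

theory Defs
  imports "HOL-Analysis.Analysis"
begin

definition partial :: "'n::finite \<Rightarrow> (real^'n \<Rightarrow> real) \<Rightarrow> real^'n \<Rightarrow> real" where
  "partial i f x = deriv (\<lambda>t. f (x + t *\<^sub>R axis i 1)) 0"

definition has_partial_at :: "'n::finite \<Rightarrow> (real^'n \<Rightarrow> real) \<Rightarrow> real^'n \<Rightarrow> bool" where
  "has_partial_at i f x \<longleftrightarrow> (\<lambda>t. f (x + t *\<^sub>R axis i 1)) differentiable (at 0)"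

definition C2_on :: "(real^'n::finite) set \<Rightarrow> (real^'n \<Rightarrow> real) \<Rightarrow> bool" where
  "C2_on S f \<longleftrightarrow> continuous_on S f \<and>
     (\<forall>i. (\<forall>x\<in>S. has_partial_at i f x) \<and> continuous_on S (partial i f) \<and>
       (\<forall>j. (\<forall>x\<in>S. has_partial_at j (partial i f) x) \<and> continuous_on S (partial j (partial i f))))"

definition laplacian :: "(real^'n::finite \<Rightarrow> real) \<Rightarrow> real^'n \<Rightarrow> real" where
  "laplacian f x = (\<Sum>i\<in>UNIV. partial i (partial i f) x)"

definition solves_S :: "real \<Rightarrow> real \<Rightarrow> real \<Rightarrow> real \<Rightarrow> (real^'n::finite \<Rightarrow> real) \<Rightarrow> (real^'n \<Rightarrow> real) \<Rightarrow> bool" where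
  "solves_S \<mu>1 \<mu>2 \<beta> q u v \<longleftrightarrow>
     C2_on (-{0}) u \<and> C2_on (-{0}) v \<and>
     (\<forall>x. x \<noteq> 0 \<longrightarrow> u x \<ge> 0 \<and> v x \<ge> 0) \<and>
     (\<forall>x. x \<noteq> 0 \<longrightarrow>
        - laplacian u x = \<mu>1 * u x powr (2*q+1) + \<beta> * u x powr q * v x powr (q+1) \<and>
        - laplacian v x = \<mu>2 * v x powr (2*q+1) + \<beta> * v x powr q * u x powr (q+1))"

definition radial :: "(real^'n::finite \<Rightarrow> real) \<Rightarrow> bool" where
  "radial u \<longleftrightarrow> (\<forall>x y. x \<noteq> 0 \<longrightarrow> norm x = norm y \<longrightarrow> u x = u y)"

definition kelvin :: "(real^'n::finite \<Rightarrow> real) \<Rightarrow> real^'n \<Rightarrow> real" where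
  "kelvin u x = norm x powr (2 - real CARD('n)) * u ((1 / (norm x)\<^sup>2) *\<^sub>R x)"

definition alpha0 :: "real \<Rightarrow> real \<Rightarrow> real" where
  "alpha0 n p = p * (n - 2) - (n + 2)"

definition delta0 :: "real \<Rightarrow> real \<Rightarrow> real" where
  "delta0 n p = (2 + alpha0 n p) / (p - 1)"

definition tau0 :: "real \<Rightarrow> real \<Rightarrow> real" where
  "tau0 n p = (n - 2) / (p - 1) * ((n + 2 + 2 * alpha0 n p) / (n - 2) - p)"

definition sigma0 :: "real \<Rightarrow> real \<Rightarrow> real" where
  "sigma0 n p = (2 + alpha0 n p) * (n - 2) / (p - 1)\<^sup>2 * (p - (n + alpha0 n p) / (n - 2))"

text \<open>bar w(t) = e^(-delta0 t) bar u(e^(-t)), evaluated along the ray through the unit vector e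
  (independent of e for radial u).\<close>
definition wbar :: "real^'n::finite \<Rightarrow> real \<Rightarrow> (real^'n \<Rightarrow> real) \<Rightarrow> real \<Rightarrow> real" where
  "wbar e p u t = exp (- delta0 (real CARD('n)) p * t) * kelvin u (exp (- t) *\<^sub>R e)"

definition Psi_bar :: "real \<Rightarrow> real \<Rightarrow> real \<Rightarrow> real \<Rightarrow> real \<Rightarrow> real \<Rightarrow> (real \<Rightarrow> real) \<Rightarrow> (real \<Rightarrow> real) \<Rightarrow> real \<Rightarrow> real" where
  "Psi_bar n p q \<mu>1 \<mu>2 \<beta> w1 w2 t =
     1/2 * ((deriv w1 t)\<^sup>2 + (deriv w2 t)\<^sup>2 - sigma0 n p * ((w1 t)\<^sup>2 + (w2 t)\<^sup>2))
     + 1 / (p + 1) * (\<mu>1 * w1 t powr (p + 1) + 2 * \<beta> * w1 t powr (q + 1) * w2 t powr (q + 1)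
                     + \<mu>2 * w2 t powr (p + 1))"

end

theory Submission imports Defs begin


lemma norm_axis_shift:
  fixes y :: "real^'n"
  shows "norm (y + t *\<^sub>R axis i (1::real)) = sqrt ((norm y)^2 + 2*t*(y$i) + t^2)"
proof -
  have "(norm (y + t *\<^sub>R axis i (1::real)))^2 = (norm y)^2 + 2*t*(y$i) + t^2"
    unfolding power2_norm_eq_inner
    by (simp add: inner_add_left inner_add_right inner_axis algebra_simps inner_commute power2_eq_square)
  then show ?thesis by (metis norm_ge_zero real_sqrt_unique)
qed

lemma deriv_norm_shift:
  fixes y :: "real^'n"
  assumes "y \<noteq> 0"
  shows "((\<lambda>t. norm (y + t *\<^sub>R axis i (1::real))) has_real_derivative (y$i / norm y)) (at 0)"
proof -
  have pos: "0 < (norm y)^2 + 2*0*(y$i) + 0^2" using assms by simp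
  have "((\<lambda>t. sqrt ((norm y)^2 + 2*t*(y$i) + t^2)) has_real_derivative
     (inverse (sqrt ((norm y)^2 + 2*0*(y$i) + 0^2)) / 2 * (2*(y$i) + 2*0))) (at 0)"
    by (rule DERIV_real_sqrt[THEN DERIV_chain2], use pos in simp) (auto intro!: derivative_eq_intros)
  then show ?thesis using assms by (simp add: norm_axis_shift field_simps)
qed

definition prof :: "'n::finite \<Rightarrow> (real^'n \<Rightarrow> real) \<Rightarrow> real \<Rightarrow> real" where
  "prof k u r = u (r *\<^sub>R axis k 1)"

lemma partial_has_deriv:
  assumes "has_partial_at i f x"
  shows "((\<lambda>t. f (x + t *\<^sub>R axis i 1)) has_real_derivative partial i f x) (at 0)"
  using assms unfolding has_partial_at_def partial_def
  by (simp add: DERIV_deriv_iff_real_differentiable)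

lemma prof_deriv_gen:
  assumes "has_partial_at k f (r *\<^sub>R axis k 1)"
  shows "(prof k f has_real_derivative partial k f (r *\<^sub>R axis k 1)) (at r)"
proof -
  have "((\<lambda>t. prof k f (t + r)) has_real_derivative partial k f (r *\<^sub>R axis k 1)) (at 0)"
    using partial_has_deriv[OF assms] by (simp add: prof_def scaleR_add_left add.commute)
  then show ?thesis using DERIV_shift[of "prof k f" _ 0 r] by simp
qed

lemma C2_onD:
  assumes "C2_on S f" "x \<in> S"
  shows "has_partial_at i f x" "has_partial_at j (partial i f) x"
  using assms unfolding C2_on_def by auto

lemma radial_prof:
  assumes "radial u" "y \<noteq> 0"
  shows "u y = prof k u (norm y)"
proof -
  have "norm (norm y *\<^sub>R axis k (1::real)) = norm y" by (simp add: norm_axis_1)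
  then show ?thesis using assms unfolding radial_def prof_def by metis
qed


lemma shift_nonzero:
  fixes y :: "real^'n"
  assumes "t \<in> ball 0 (norm y)"
  shows "y + t *\<^sub>R axis i (1::real) \<noteq> 0"
proof
  assume h: "y + t *\<^sub>R axis i 1 = 0"
  then have "y = - (t *\<^sub>R axis i 1)" by (simp add: eq_neg_iff_add_eq_0)
  then have "norm y = \<bar>t\<bar>" by (simp add: norm_axis_1)
  with assms show False by simp
qed

lemma radial_partial1:
  fixes u :: "real^'n::finite \<Rightarrow> real"
  assumes C2: "C2_on (-{0}) u" and rad: "radial u" and y: "y \<noteq> 0"
  shows "((\<lambda>t. u (y + t *\<^sub>R axis i 1)) has_real_derivative
            prof k (partial k u) (norm y) * (y$i / norm y)) (at 0)"
proof -
  have ny: "norm y *\<^sub>R axis k (1::real) \<in> -{0}" using y by (simp add: axis_eq_0_iff)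
  have d1: "(prof k u has_real_derivative prof k (partial k u) (norm y)) (at (norm y))"
    using prof_deriv_gen[OF C2_onD(1)[OF C2 ny]] by (simp add: prof_def)
  have "((\<lambda>t. prof k u (norm (y + t *\<^sub>R axis i 1))) has_real_derivative
            prof k (partial k u) (norm y) * (y$i / norm y)) (at 0)"
  proof -
    have d1': "(prof k u has_real_derivative prof k (partial k u) (norm y)) (at ((\<lambda>t. norm (y + t *\<^sub>R axis i (1::real))) 0))"
      using d1 by simp
    show ?thesis using DERIV_chain2[OF d1' deriv_norm_shift[OF y]] by simp
  qed
  then show ?thesis
  proof (rule has_field_derivative_transform_within_open[where S="ball 0 (norm y)"])
    fix t :: real assume "t \<in> ball 0 (norm y)"
    then show "prof k u (norm (y + t *\<^sub>R axis i 1)) = u (y + t *\<^sub>R axis i 1)"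
      by (metis shift_nonzero radial_prof[OF rad])
  qed (use y in auto)
qed

lemma radial_partial1_eq:
  fixes u :: "real^'n::finite \<Rightarrow> real"
  assumes C2: "C2_on (-{0}) u" and rad: "radial u" and y: "y \<noteq> 0"
  shows "partial i u y = prof k (partial k u) (norm y) * (y$i / norm y)"
  unfolding partial_def[of i u y] using DERIV_imp_deriv[OF radial_partial1[OF assms, of i k]] .

lemma radial_partial2:
  fixes u :: "real^'n::finite \<Rightarrow> real"
  assumes C2: "C2_on (-{0}) u" and rad: "radial u" and x: "x \<noteq> 0"
  shows "((\<lambda>t. partial i u (x + t *\<^sub>R axis i 1)) has_real_derivative
            prof k (partial k (partial k u)) (norm x) * (x$i / norm x)^2
            + prof k (partial k u) (norm x) * (1 / norm x - (x$i)^2 / (norm x)^3)) (at 0)"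
proof -
  have nx: "norm x *\<^sub>R axis k (1::real) \<in> -{0}" using x by (simp add: axis_eq_0_iff)
  have d1: "(prof k (partial k u) has_real_derivative prof k (partial k (partial k u)) (norm x)) (at (norm x))"
    using prof_deriv_gen[OF C2_onD(2)[OF C2 nx, of k k]] by (simp add: prof_def)
  have dn: "((\<lambda>t. norm (x + t *\<^sub>R axis i 1)) has_real_derivative (x$i / norm x)) (at 0)"
    using deriv_norm_shift[OF x] .
  have c1: "((\<lambda>t. prof k (partial k u) (norm (x + t *\<^sub>R axis i 1))) has_real_derivative
            prof k (partial k (partial k u)) (norm x) * (x$i / norm x)) (at 0)"
  proof -
    have d1': "(prof k (partial k u) has_real_derivative prof k (partial k (partial k u)) (norm x)) (at ((\<lambda>t. norm (x + t *\<^sub>R axis i (1::real))) 0))"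
      using d1 by simp
    show ?thesis using DERIV_chain2[OF d1' dn] by simp
  qed
  have nx0: "norm x \<noteq> 0" using x by simp
  have c2: "((\<lambda>t. (x$i + t) / norm (x + t *\<^sub>R axis i 1)) has_real_derivative
            (1 / norm x - (x$i)^2 / (norm x)^3)) (at 0)"
    using DERIV_divide[OF DERIV_add[OF DERIV_const[of "x$i"] DERIV_ident] dn] nx0
    by (simp add: field_simps power2_eq_square power3_eq_cube)
  have "((\<lambda>t. prof k (partial k u) (norm (x + t *\<^sub>R axis i 1)) * ((x$i + t) / norm (x + t *\<^sub>R axis i 1)))
       has_real_derivative
            prof k (partial k (partial k u)) (norm x) * (x$i / norm x)^2
            + prof k (partial k u) (norm x) * (1 / norm x - (x$i)^2 / (norm x)^3)) (at 0)"
    using DERIV_mult[OF c1 c2] by (rule DERIV_cong) (simp add: algebra_simps power2_eq_square)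
  then show ?thesis
  proof (rule has_field_derivative_transform_within_open[where S="ball 0 (norm x)"])
    fix t :: real assume "t \<in> ball 0 (norm x)"
    then have "x + t *\<^sub>R axis i 1 \<noteq> 0" by (rule shift_nonzero)
    then show "prof k (partial k u) (norm (x + t *\<^sub>R axis i 1)) * ((x $ i + t) / norm (x + t *\<^sub>R axis i 1)) = partial i u (x + t *\<^sub>R axis i 1)"
      using radial_partial1_eq[OF C2 rad, of "x + t *\<^sub>R axis i 1" i k] by (simp add: axis_def)
  qed (use x in auto)
qed


lemma sum_sq_comp: "(\<Sum>i\<in>UNIV. (x$i)^2) = (norm (x::real^'n))^2"
  unfolding power2_norm_eq_inner inner_vec_def by (simp add: power2_eq_square)

lemma radial_laplacian:
  fixes u :: "real^'n::finite \<Rightarrow> real"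
  assumes C2: "C2_on (-{0}) u" and rad: "radial u" and x: "x \<noteq> 0"
  shows "laplacian u x = prof k (partial k (partial k u)) (norm x)
           + (real CARD('n) - 1) / norm x * prof k (partial k u) (norm x)"
proof -
  let ?P2 = "prof k (partial k (partial k u)) (norm x)" and ?P1 = "prof k (partial k u) (norm x)"
  have "laplacian u x = (\<Sum>i\<in>UNIV. ?P2 * (x$i / norm x)^2 + ?P1 * (1 / norm x - (x$i)^2 / (norm x)^3))"
    unfolding laplacian_def
    by (rule sum.cong[OF refl]) (simp add: partial_def[of _ "partial _ u" x] DERIV_imp_deriv[OF radial_partial2[OF C2 rad x]])
  also have "\<dots> = ?P2 * (\<Sum>i\<in>UNIV. (x$i)^2) / (norm x)^2 + ?P1 * (real CARD('n) / norm x - (\<Sum>i\<in>UNIV. (x$i)^2) / (norm x)^3)"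
    by (simp add: sum.distrib sum_distrib_left sum_subtractf sum_divide_distrib[symmetric] power_divide algebra_simps)
  also have "\<dots> = ?P2 + (real CARD('n) - 1) / norm x * ?P1"
    unfolding sum_sq_comp using x by (simp add: field_simps power2_eq_square power3_eq_cube)
  finally show ?thesis .
qed



locale bnd =
  fixes \<phi> \<phi>1 F :: "real \<Rightarrow> real" and n :: nat and \<mu> p :: real
  assumes p1: "p > 1" and mu: "\<mu> > 0" and n1: "n \<ge> 1"
    and D0: "\<And>r. r > 0 \<Longrightarrow> (\<phi> has_real_derivative \<phi>1 r) (at r)"
    and D1: "\<And>r. r > 0 \<Longrightarrow> ((\<lambda>s. s^(n-1) * \<phi>1 s) has_real_derivative - (r^(n-1) * F r)) (at r)"
    and Fge: "\<And>r. r > 0 \<Longrightarrow> F r \<ge> \<mu> * \<phi> r powr p"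
    and nn: "\<And>r. r > 0 \<Longrightarrow> \<phi> r \<ge> 0"
begin

definition "\<psi> s = s^(n-1) * \<phi>1 s"

lemma psi_deriv: "r > 0 \<Longrightarrow> (\<psi> has_real_derivative - (r^(n-1) * F r)) (at r)"
  using D1 unfolding \<psi>_def[abs_def] .

lemma psi_mono: "0 < a \<Longrightarrow> a \<le> b \<Longrightarrow> \<psi> b \<le> \<psi> a"
proof (rule DERIV_nonpos_imp_nonincreasing[of a b \<psi>])
  fix x assume "0 < a" "a \<le> x"
  then have xp: "x > 0" by simp
  have "F x \<ge> 0" using Fge[OF xp] nn[OF xp] mu by (smt (verit) mult_nonneg_nonneg powr_ge_zero)
  then show "\<exists>y. (\<psi> has_real_derivative y) (at x) \<and> y \<le> 0"
    using psi_deriv[OF xp] xp by (intro exI[of _ "- (x^(n-1) * F x)"]) simp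
qed

lemma phi1_sign: "s > 0 \<Longrightarrow> \<phi>1 s = \<psi> s / s^(n-1)"
  unfolding \<psi>_def by simp

lemma phi_dec:
  assumes "0 < a" "a \<le> b" "\<And>s. a \<le> s \<Longrightarrow> s \<le> b \<Longrightarrow> \<psi> s \<le> 0"
  shows "\<phi> b \<le> \<phi> a"
proof (rule DERIV_nonpos_imp_nonincreasing[OF assms(2)])
  fix x assume x: "a \<le> x" "x \<le> b"
  then have "\<phi>1 x \<le> 0" using assms(3)[OF x] assms(1) x by (simp add: phi1_sign divide_nonpos_pos)
  then show "\<exists>y. (\<phi> has_real_derivative y) (at x) \<and> y \<le> 0" using D0[of x] x assms(1) by auto
qed

lemma phi_inc:
  assumes "0 < a" "a \<le> b" "\<And>s. a \<le> s \<Longrightarrow> s \<le> b \<Longrightarrow> \<psi> s \<ge> 0"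
  shows "\<phi> a \<le> \<phi> b"
proof (rule DERIV_nonneg_imp_nondecreasing[OF assms(2)])
  fix x assume x: "a \<le> x" "x \<le> b"
  then have "\<phi>1 x \<ge> 0" using assms(3)[OF x] assms(1) x by (simp add: phi1_sign)
  then show "\<exists>y. (\<phi> has_real_derivative y) (at x) \<and> y \<ge> 0" using D0[of x] x assms(1) by auto
qed

lemma psi_drop:
  assumes "0 < a" "a \<le> b" "\<And>s. a \<le> s \<Longrightarrow> s \<le> b \<Longrightarrow> \<phi> s \<ge> c0" "c0 \<ge> 0"
  shows "\<psi> b \<le> \<psi> a - \<mu> * c0 powr p * (b^n - a^n) / n"
proof -
  let ?g = "\<lambda>s. \<psi> s + \<mu> * c0 powr p * s^n / n"
  have "?g b \<le> ?g a"
  proof (rule DERIV_nonpos_imp_nonincreasing[OF assms(2)])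
    fix x assume x: "a \<le> x" "x \<le> b"
    have xp: "x > 0" using x assms by simp
    have d: "(?g has_real_derivative - (x^(n-1) * F x) + \<mu> * c0 powr p * (real n * x^(n-1)) / n) (at x)"
    proof -
      have d2: "((\<lambda>s. \<mu> * c0 powr p * s^n / n) has_real_derivative \<mu> * c0 powr p * (real n * x^(n-1)) / n) (at x)"
        by (intro derivative_eq_intros) (use n1 in auto)
      show ?thesis using DERIV_add[OF psi_deriv[OF xp] d2] by simp
    qed
    have "F x \<ge> \<mu> * c0 powr p"
      using Fge[OF xp] powr_mono2[of p c0 "\<phi> x"] assms(3)[OF x] assms(4) p1 mu
      by (smt (verit) mult_left_mono)
    then have "- (x^(n-1) * F x) + \<mu> * c0 powr p * (real n * x^(n-1)) / n \<le> 0"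
      using n1 xp by (simp add: mult_left_mono)
    then show "\<exists>y. (?g has_real_derivative y) (at x) \<and> y \<le> 0" using d by blast
  qed
  then show ?thesis by (simp add: diff_divide_distrib right_diff_distrib algebra_simps)
qed


definition "cc = \<mu> * (1 - 1/2^n) / n"

lemma cc_pos: "cc > 0"
proof -
  have "(1::real)/2^n < 1" using n1 by (simp add: field_simps)
  then show ?thesis unfolding cc_def using mu n1 by simp
qed

lemma step1:
  assumes r: "r > 0" and h: "\<psi> (r/2) \<le> 0"
  shows "\<phi>1 r \<le> - cc * r * \<phi> r powr p"
proof -
  have ps: "\<psi> s \<le> 0" if "r/2 \<le> s" for s using psi_mono[of "r/2" s] that h r by simp
  have ge: "\<phi> s \<ge> \<phi> r" if "r/2 \<le> s" "s \<le> r" for s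
    by (rule phi_dec) (use that r ps in auto)
  have "\<psi> r \<le> \<psi> (r/2) - \<mu> * \<phi> r powr p * (r^n - (r/2)^n) / n"
    by (rule psi_drop) (use r ge nn in auto)
  also have "\<dots> \<le> - \<mu> * \<phi> r powr p * (r^n - (r/2)^n) / n" using h by simp
  also have "\<dots> = - cc * r * \<phi> r powr p * r^(n-1)"
  proof -
    have "r^n = r * r^(n-1)" using n1 by (simp add: power_eq_if)
    moreover have "(r/2)^n = r^n / 2^n" by (simp add: power_divide)
    ultimately show ?thesis unfolding cc_def using n1 by (simp add: field_simps)
  qed
  finally have "\<psi> r \<le> - cc * r * \<phi> r powr p * r^(n-1)" .
  then show ?thesis using r by (simp add: phi1_sign pos_divide_le_eq)
qed

definition "\<kappa> = (p - 1) * cc * 3 / 8"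

lemma step2:
  assumes r: "r > 0" and h: "\<psi> (r/4) \<le> 0"
  shows "r powr (2/(p-1)) * \<phi> r \<le> (1/\<kappa>) powr (1/(p-1))"
proof (cases "\<phi> r = 0")
  case True then show ?thesis by simp
next
  case False
  then have phr: "\<phi> r > 0" using nn[OF r] by simp
  have ps: "\<psi> s \<le> 0" if "r/4 \<le> s" for s using psi_mono[of "r/4" s] that h r by simp
  have ge: "\<phi> s \<ge> \<phi> r" if "r/2 \<le> s" "s \<le> r" for s
    by (rule phi_dec) (use that r ps in auto)
  have kp: "\<kappa> > 0" unfolding \<kappa>_def using p1 cc_pos by simp
  let ?h = "\<lambda>s. \<phi> s powr (1 - p) - (p - 1) * cc * s^2 / 2"
  have "?h (r/2) \<le> ?h r"
  proof (rule DERIV_nonneg_imp_nondecreasing[where f="?h"])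
    fix x assume x: "r/2 \<le> x" "x \<le> r"
    have xp: "x > 0" using x r by simp
    have phx: "\<phi> x > 0" using ge[OF x] phr by simp
    have s1: "\<phi>1 x \<le> - cc * x * \<phi> x powr p" by (rule step1[OF xp ps]) (use x in simp)
    have d: "(?h has_real_derivative (1 - p) * \<phi> x powr (1 - p - 1) * \<phi>1 x - (p - 1) * cc * (2 * x) / 2) (at x)"
    proof -
      have a: "((\<lambda>s. \<phi> s powr (1 - p)) has_real_derivative (1 - p) * \<phi> x powr (1 - p - of_nat 1) * \<phi>1 x) (at x)"
        by (rule DERIV_fun_powr[OF D0[OF xp] phx])
      have b: "((\<lambda>s. (p - 1) * cc * s^2 / 2) has_real_derivative (p - 1) * cc * (2 * x) / 2) (at x)"
        by (intro derivative_eq_intros) auto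
      show ?thesis using DERIV_diff[OF a b] by simp
    qed
    have key: "\<phi> x powr (- p) * \<phi> x powr p = 1" using phx by (simp add: powr_add[symmetric])
    have "(1 - p) * \<phi> x powr (- p) * \<phi>1 x \<ge> (1 - p) * \<phi> x powr (- p) * (- cc * x * \<phi> x powr p)"
    proof -
      have "(1 - p) * \<phi> x powr (- p) \<le> 0" using p1 by (simp add: mult_nonpos_nonneg)
      from mult_left_mono_neg[OF s1 this] show ?thesis by (simp add: mult.assoc)
    qed
    also have "(1 - p) * \<phi> x powr (- p) * (- cc * x * \<phi> x powr p) = (p - 1) * cc * x"
      using key by (simp add: algebra_simps)
    finally have "(1 - p) * \<phi> x powr (1 - p - 1) * \<phi>1 x - (p - 1) * cc * (2 * x) / 2 \<ge> 0" by simp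
    then show "\<exists>y. (?h has_real_derivative y) (at x) \<and> y \<ge> 0" using d by blast
  qed (use r in simp)
  then have "\<phi> r powr (1 - p) \<ge> \<phi> (r/2) powr (1 - p) + ((p - 1) * cc * r^2 / 2 - (p - 1) * cc * (r/2)^2 / 2)"
    by linarith
  moreover have "\<phi> (r/2) powr (1 - p) \<ge> 0" by simp
  moreover have "((p - 1) * cc * r^2 / 2 - (p - 1) * cc * (r/2)^2 / 2) = \<kappa> * r^2"
    unfolding \<kappa>_def by (simp add: power2_eq_square field_simps)
  ultimately have A: "\<phi> r powr (1 - p) \<ge> \<kappa> * r^2" by linarith
  define X where "X = r powr (2/(p-1)) * \<phi> r"
  have Xp: "X > 0" unfolding X_def using r phr by simp
  have "X powr (p - 1) = r powr (2/(p-1) * (p-1)) * \<phi> r powr (p - 1)"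
    unfolding X_def using r phr by (simp add: powr_mult powr_powr)
  also have "\<dots> = r^2 * \<phi> r powr (p - 1)"
  proof -
    have "2/(p-1)*(p-1) = 2" using p1 by (simp add: field_simps)
    moreover have "r powr 2 = r^2" using powr_realpow[OF r, of 2] by simp
    ultimately show ?thesis by simp
  qed
  also have "\<phi> r powr (p - 1) = 1 / \<phi> r powr (1 - p)" using phr by (simp add: powr_minus_divide[symmetric])
  finally have "X powr (p - 1) = r^2 / \<phi> r powr (1 - p)" by simp
  also have "\<dots> \<le> r^2 / (\<kappa> * r^2)"
  proof (rule divide_left_mono[OF A])
    have "\<phi> r powr (1 - p) > 0" using phr by simp
    then show "0 < \<phi> r powr (1 - p) * (\<kappa> * r^2)" using kp r by simp
  qed simp
  also have "\<dots> = 1/\<kappa>" using r by simp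
  finally have B: "X powr (p - 1) \<le> 1/\<kappa>" .
  have "X = (X powr (p - 1)) powr (1/(p-1))" using p1 Xp by (simp add: powr_powr)
  also have "\<dots> \<le> (1/\<kappa>) powr (1/(p-1))" using B p1 by (intro powr_mono2) auto
  finally show ?thesis unfolding X_def .
qed


lemma case1:
  assumes allpos: "\<And>r. r > 0 \<Longrightarrow> \<psi> r > 0" and r0: "r0 > 0"
  shows "\<phi> r0 = 0"
proof (rule ccontr)
  assume "\<phi> r0 \<noteq> 0"
  then have ph0: "\<phi> r0 > 0" using nn[OF r0] by simp
  define s where "s = 1 + r0^n + n * \<psi> r0 / (\<mu> * \<phi> r0 powr p)"
  have A: "\<mu> * \<phi> r0 powr p > 0" using mu ph0 by simp
  have pr: "\<psi> r0 > 0" using allpos[OF r0] .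
  have s1: "s \<ge> 1" unfolding s_def using A pr by (simp add: zero_le_power r0 less_imp_le)
  have sr0: "r0 \<le> s"
  proof (cases "r0 \<le> 1")
    case True then show ?thesis using s1 by simp
  next
    case False
    then have "r0 \<le> r0^n" using n1 by (metis linorder_not_le order.strict_implies_order power_increasing power_one_right)
    then show ?thesis unfolding s_def using A pr by (smt (verit) divide_nonneg_pos of_nat_0_le_iff mult_nonneg_nonneg)
  qed
  have "s \<le> s^n" using n1 s1 by (metis power_increasing power_one_right)
  then have big: "s^n - r0^n > n * \<psi> r0 / (\<mu> * \<phi> r0 powr p)" unfolding s_def by linarith
  have ge: "\<phi> z \<ge> \<phi> r0" if "r0 \<le> z" for z
  proof (rule phi_inc)
    fix y assume "r0 \<le> y" then show "\<psi> y \<ge> 0" using allpos[of y] r0 by simp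
  qed (use that r0 in auto)
  have "\<psi> s \<le> \<psi> r0 - \<mu> * \<phi> r0 powr p * (s^n - r0^n) / n"
    by (rule psi_drop) (use r0 sr0 ge ph0 in auto)
  moreover have "\<mu> * \<phi> r0 powr p * (s^n - r0^n) / n > \<psi> r0"
  proof -
    have "n * \<psi> r0 / (\<mu> * \<phi> r0 powr p) * (\<mu> * \<phi> r0 powr p) / n = \<psi> r0" using A n1 ph0 mu by simp
    moreover have "n * \<psi> r0 / (\<mu> * \<phi> r0 powr p) * (\<mu> * \<phi> r0 powr p) / n < (s^n - r0^n) * (\<mu> * \<phi> r0 powr p) / n"
      using big A n1 by (intro divide_strict_right_mono mult_strict_right_mono) auto
    ultimately show ?thesis by (simp add: algebra_simps)
  qed
  ultimately have "\<psi> s < 0" by linarith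
  moreover have "s > 0" using s1 by simp
  ultimately show False using allpos by fastforce
qed

lemma bound: "\<exists>B. \<forall>r>0. r powr (2/(p-1)) * \<phi> r \<le> B"
proof -
  define m where "m = 2/(p-1)"
  have m0: "m \<ge> 0" unfolding m_def using p1 by simp
  define K where "K = (1/\<kappa>) powr (1/(p-1))"
  have K: "r powr m * \<phi> r \<le> K" if "r > 0" "\<psi> (r/4) \<le> 0" for r
    using step2[OF that] unfolding K_def m_def .
  consider (c1) "\<forall>r>0. \<psi> r > 0" | (c2) "\<forall>r>0. \<psi> r \<le> 0"
    | (c3) r0 r1 where "r0 > 0" "\<psi> r0 > 0" "r1 > 0" "\<psi> r1 \<le> 0"
    by (meson not_le)
  then show ?thesis
  proof cases
    case c1
    then show ?thesis using case1 by (intro exI[of _ 0]) auto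
  next
    case c2
    then show ?thesis using K unfolding m_def by (intro exI[of _ K]) auto
  next
    case c3
    have r01: "r0 < r1" using psi_mono[of r1 r0] c3 by (meson linorder_not_le order_trans less_imp_le not_less)
    have cont: "continuous_on {r0..4*r1} (\<lambda>r. r powr m * \<phi> r)"
    proof (intro continuous_at_imp_continuous_on ballI)
      fix x assume "x \<in> {r0..4*r1}"
      then have xp: "x > 0" using c3 by simp
      have "isCont \<phi> x" by (rule DERIV_isCont[OF D0[OF xp]])
      then show "isCont (\<lambda>r. r powr m * \<phi> r) x" using xp by (intro continuous_intros) auto
    qed
    obtain xm where xm: "\<forall>y\<in>{r0..4*r1}. y powr m * \<phi> y \<le> xm powr m * \<phi> xm"
      using continuous_attains_sup[OF compact_Icc _ cont] r01 c3 by fastforce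
    define B where "B = max K (max (r0 powr m * \<phi> r0) (xm powr m * \<phi> xm))"
    have "r powr m * \<phi> r \<le> B" if r: "r > 0" for r
    proof -
      consider "r \<le> r0" | "r0 \<le> r \<and> r \<le> 4*r1" | "4*r1 \<le> r" by linarith
      then show ?thesis
      proof cases
        case 1
        have "\<phi> r \<le> \<phi> r0"
          by (rule phi_inc) (use r 1 c3 psi_mono in \<open>auto intro: order.trans[OF less_imp_le[OF \<open>\<psi> r0 > 0\<close>]]\<close>)
        moreover have "r powr m \<le> r0 powr m" using powr_mono2[OF m0 less_imp_le[OF r] 1] .
        ultimately have "r powr m * \<phi> r \<le> r0 powr m * \<phi> r0"
          using nn[OF r] by (intro mult_mono) auto
        then show ?thesis unfolding B_def by simp
      next
        case 2
        then have "r powr m * \<phi> r \<le> xm powr m * \<phi> xm" using xm by simp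
        then show ?thesis unfolding B_def by simp
      next
        case 3
        have "\<psi> (r/4) \<le> 0" using psi_mono[of r1 "r/4"] c3 3 by simp
        then show ?thesis using K[OF r] unfolding B_def by simp
      qed
    qed
    then show ?thesis unfolding m_def by blast
  qed
qed

end


lemma DERIV_powr_nonneg:
  fixes g :: "real \<Rightarrow> real"
  assumes a: "a > 1" and d: "(g has_real_derivative g') (at t)" and nn: "\<And>s. g s \<ge> 0"
  shows "((\<lambda>s. g s powr a) has_real_derivative a * g t powr (a - 1) * g') (at t)"
proof (cases "g t > 0")
  case True
  show ?thesis using DERIV_fun_powr[OF d True, of a] by simp
next
  case False
  then have g0: "g t = 0" using nn[of t] by simp
  have eq: "(\<lambda>y. (g y powr a - g t powr a) / (y - t)) = (\<lambda>y. g y powr (a - 1) * ((g y - g t) / (y - t)))"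
  proof
    fix y
    have "g y powr a = g y powr (a - 1) * g y"
    proof (cases "g y = 0")
      case True then show ?thesis by simp
    next
      case False
      then have "g y > 0" using nn[of y] by simp
      have "g y powr (a - 1 + 1) = g y powr (a - 1) * g y powr 1" by (rule powr_add)
      then show ?thesis using \<open>g y > 0\<close> by simp
    qed
    then show "(g y powr a - g t powr a) / (y - t) = g y powr (a - 1) * ((g y - g t) / (y - t))"
      using g0 by simp
  qed
  have c: "((\<lambda>y. g y powr (a - 1)) \<longlongrightarrow> 0) (at t)"
  proof (rule tendsto_zero_powrI)
    have "isCont g t" by (rule DERIV_isCont[OF d])
    then show "(g \<longlongrightarrow> 0) (at t)" using g0 by (metis isCont_def)
  qed (use a nn in auto)
  have q: "((\<lambda>y. (g y - g t) / (y - t)) \<longlongrightarrow> g') (at t)" using d by (simp add: has_field_derivative_iff)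
  have "((\<lambda>y. (g y powr a - g t powr a) / (y - t)) \<longlongrightarrow> 0 * g') (at t)"
    unfolding eq by (rule tendsto_mult[OF c q])
  then show ?thesis using g0 by (simp add: has_field_derivative_iff)
qed

lemma deriv_bound:
  fixes W W1 W2 :: "real \<Rightarrow> real"
  assumes k: "k > 0"
    and d0: "\<And>t. (W has_real_derivative W1 t) (at t)"
    and d1: "\<And>t. (W1 has_real_derivative W2 t) (at t)"
    and h: "\<And>t. \<bar>W2 t - k * W1 t\<bar> \<le> M"
    and b: "\<And>t. 0 \<le> W t" "\<And>t. W t \<le> B"
  shows "\<bar>W1 t0\<bar> \<le> M / k"
proof (rule ccontr)
  assume "\<not> \<bar>W1 t0\<bar> \<le> M / k"
  then consider "W1 t0 > M / k" | "W1 t0 < - M / k" by linarith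
  then show False
  proof cases
    case 1
    define \<gamma> where "\<gamma> = W1 t0 - M / k"
    have gp: "\<gamma> > 0" using 1 unfolding \<gamma>_def by simp
    have M0: "M \<ge> 0" using h[of 0] by simp
    have low: "W1 t \<ge> \<gamma>" if "t0 \<le> t" for t
    proof -
      let ?g = "\<lambda>t. exp (- k * t) * (W1 t - M / k)"
      have "?g t0 \<le> ?g t"
      proof (rule DERIV_nonneg_imp_nondecreasing[where f="?g", OF that])
        fix x
        have dd: "(?g has_real_derivative exp (- k * x) * (- k) * (W1 x - M / k) + exp (- k * x) * W2 x) (at x)"
          by (intro derivative_eq_intros) (auto intro: d1)
        have "exp (- k * x) * (- k) * (W1 x - M / k) + exp (- k * x) * W2 x = exp (- k * x) * (W2 x - k * W1 x + M)"
          using k by (simp add: field_simps)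
        moreover have "W2 x - k * W1 x + M \<ge> 0" using h[of x] by simp
        ultimately show "\<exists>y. (?g has_real_derivative y) (at x) \<and> y \<ge> 0" using dd by (intro exI[of _ _]) auto
      qed
      moreover have "exp (- k * t) * \<gamma> \<le> exp (- k * t0) * \<gamma>" using gp k that by simp
      ultimately have "exp (- k * t) * \<gamma> \<le> exp (- k * t) * (W1 t - M / k)" unfolding \<gamma>_def by linarith
      then have "\<gamma> \<le> W1 t - M / k" by simp
      then show ?thesis using M0 k by (smt (verit) divide_nonneg_pos)
    qed
    define t1 where "t1 = t0 + (B + 1) / \<gamma>"
    have tt: "t0 \<le> t1" unfolding t1_def using gp b(1)[of t0] b(2)[of t0] by simp
    have "W t0 - \<gamma> * t0 \<le> W t1 - \<gamma> * t1"
    proof (rule DERIV_nonneg_imp_nondecreasing[where f="\<lambda>t. W t - \<gamma> * t", OF tt])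
      fix x assume "t0 \<le> x"
      then have "W1 x - \<gamma> \<ge> 0" using low[of x] by linarith
      moreover have "((\<lambda>t. W t - \<gamma> * t) has_real_derivative W1 x - \<gamma>) (at x)"
        by (intro derivative_eq_intros) (auto intro: d0)
      ultimately show "\<exists>y. ((\<lambda>t. W t - \<gamma> * t) has_real_derivative y) (at x) \<and> y \<ge> 0" by blast
    qed
    then have "W t1 \<ge> W t0 + \<gamma> * (t1 - t0)" by (simp add: algebra_simps)
    also have "\<gamma> * (t1 - t0) = B + 1" unfolding t1_def using gp by simp
    finally show False using b(1)[of t0] b(2)[of t1] by simp
  next
    case 2
    define \<gamma> where "\<gamma> = - (W1 t0 + M / k)"
    have gp: "\<gamma> > 0" using 2 unfolding \<gamma>_def by simp
    have M0: "M \<ge> 0" using h[of 0] by simp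
    have up: "W1 t \<le> - \<gamma>" if "t0 \<le> t" for t
    proof -
      let ?g = "\<lambda>t. exp (- k * t) * (W1 t + M / k)"
      have "?g t \<le> ?g t0"
      proof (rule DERIV_nonpos_imp_nonincreasing[where f="?g", OF that])
        fix x
        have dd: "(?g has_real_derivative exp (- k * x) * (- k) * (W1 x + M / k) + exp (- k * x) * W2 x) (at x)"
          by (intro derivative_eq_intros) (auto intro: d1)
        have "exp (- k * x) * (- k) * (W1 x + M / k) + exp (- k * x) * W2 x = exp (- k * x) * (W2 x - k * W1 x - M)"
          using k by (simp add: field_simps)
        moreover have "W2 x - k * W1 x - M \<le> 0" using h[of x] by simp
        ultimately show "\<exists>y. (?g has_real_derivative y) (at x) \<and> y \<le> 0" using dd
          by (intro exI[of _ _]) (auto simp: mult_nonneg_nonpos)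
      qed
      moreover have "exp (- k * t0) * (- \<gamma>) \<le> exp (- k * t) * (- \<gamma>)" using gp k that by simp
      ultimately have "exp (- k * t) * (W1 t + M / k) \<le> exp (- k * t) * (- \<gamma>)" unfolding \<gamma>_def by linarith
      then have "exp (- k * t) * (W1 t + M / k) \<le> exp (- k * t) * (- \<gamma>)" by simp
      then have "W1 t + M / k \<le> - \<gamma>" by (rule mult_left_le_imp_le) simp
      then show ?thesis using M0 k by (smt (verit) divide_nonneg_pos)
    qed
    define t1 where "t1 = t0 + (B + 1) / \<gamma>"
    have tt: "t0 \<le> t1" unfolding t1_def using gp b(1)[of t0] b(2)[of t0] by simp
    have "W t0 + \<gamma> * t0 \<ge> W t1 + \<gamma> * t1"
    proof (rule DERIV_nonpos_imp_nonincreasing[where f="\<lambda>t. W t + \<gamma> * t", OF tt])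
      fix x assume "t0 \<le> x"
      then have "W1 x + \<gamma> \<le> 0" using up[of x] by linarith
      moreover have "((\<lambda>t. W t + \<gamma> * t) has_real_derivative W1 x + \<gamma>) (at x)"
        by (intro derivative_eq_intros) (auto intro: d0)
      ultimately show "\<exists>y. ((\<lambda>t. W t + \<gamma> * t) has_real_derivative y) (at x) \<and> y \<le> 0" by blast
    qed
    then have "W t1 \<le> W t0 - \<gamma> * (t1 - t0)" by (simp add: algebra_simps)
    also have "\<gamma> * (t1 - t0) = B + 1" unfolding t1_def using gp by simp
    finally show False using b(1)[of t1] b(2)[of t0] by simp
  qed
qed



lemma ode_transform:
  fixes \<phi> \<phi>1 \<phi>2 \<zeta> :: "real \<Rightarrow> real" and m Nr \<mu> \<beta> q :: real
  assumes D0: "\<And>r. r > 0 \<Longrightarrow> (\<phi> has_real_derivative \<phi>1 r) (at r)"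
    and D1: "\<And>r. r > 0 \<Longrightarrow> (\<phi>1 has_real_derivative \<phi>2 r) (at r)"
    and E: "\<And>r. r > 0 \<Longrightarrow> \<phi>2 r = - ((Nr - 1) / r * \<phi>1 r) - (\<mu> * \<phi> r powr (2*q+1) + \<beta> * \<phi> r powr q * \<zeta> r powr (q+1))"
    and mp: "m * (2*q+1) = m + 2"
  shows "((\<lambda>t. exp (m*t) * \<phi> (exp t)) has_real_derivative exp (m*t) * (m * \<phi> (exp t) + exp t * \<phi>1 (exp t))) (at t)"
    "((\<lambda>t. exp (m*t) * (m * \<phi> (exp t) + exp t * \<phi>1 (exp t))) has_real_derivative
        exp (m*t) * (m*m * \<phi> (exp t) + (2*m+1) * exp t * \<phi>1 (exp t) + exp t * exp t * \<phi>2 (exp t))) (at t)"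
    "exp (m*t) * (m*m * \<phi> (exp t) + (2*m+1) * exp t * \<phi>1 (exp t) + exp t * exp t * \<phi>2 (exp t))
      + (Nr - 2 - 2*m) * (exp (m*t) * (m * \<phi> (exp t) + exp t * \<phi>1 (exp t)))
      - m * (Nr - 2 - m) * (exp (m*t) * \<phi> (exp t))
      + \<mu> * (exp (m*t) * \<phi> (exp t)) powr (2*q+1)
      + \<beta> * (exp (m*t) * \<phi> (exp t)) powr q * (exp (m*t) * \<zeta> (exp t)) powr (q+1) = 0"
proof -
  have e0: "exp t > 0" by simp
  have d0: "(\<phi> has_real_derivative \<phi>1 (exp t)) (at (exp t))" using D0[OF e0] .
  have d1: "(\<phi>1 has_real_derivative \<phi>2 (exp t)) (at (exp t))" using D1[OF e0] .
  have c0: "((\<lambda>t. \<phi> (exp t)) has_real_derivative \<phi>1 (exp t) * exp t) (at t)"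
    using DERIV_chain2[OF d0 DERIV_exp] .
  have c1: "((\<lambda>t. \<phi>1 (exp t)) has_real_derivative \<phi>2 (exp t) * exp t) (at t)"
    using DERIV_chain2[OF d1 DERIV_exp] .
  show "((\<lambda>t. exp (m*t) * \<phi> (exp t)) has_real_derivative exp (m*t) * (m * \<phi> (exp t) + exp t * \<phi>1 (exp t))) (at t)"
    by (rule DERIV_cong, rule derivative_eq_intros c0 | simp)+ (simp add: algebra_simps)
  show "((\<lambda>t. exp (m*t) * (m * \<phi> (exp t) + exp t * \<phi>1 (exp t))) has_real_derivative
        exp (m*t) * (m*m * \<phi> (exp t) + (2*m+1) * exp t * \<phi>1 (exp t) + exp t * exp t * \<phi>2 (exp t))) (at t)"
    by (rule DERIV_cong, rule derivative_eq_intros c0 c1 | simp)+ (simp add: algebra_simps)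
  have ex: "exp (m*t) powr (2*q+1) = exp (m*t) * exp t * exp t"
    using mp by (simp add: exp_powr_real exp_add[symmetric] algebra_simps)
  have ex2: "exp (m*t) powr q * exp (m*t) powr (q+1) = exp (m*t) * exp t * exp t"
    using ex by (simp add: powr_add[symmetric] algebra_simps)
  have "\<mu> * (exp (m*t) * \<phi> (exp t)) powr (2*q+1)
      + \<beta> * (exp (m*t) * \<phi> (exp t)) powr q * (exp (m*t) * \<zeta> (exp t)) powr (q+1)
      = exp (m*t) * exp t * exp t * (\<mu> * \<phi> (exp t) powr (2*q+1) + \<beta> * \<phi> (exp t) powr q * \<zeta> (exp t) powr (q+1))"
    unfolding powr_mult using ex ex2 by (simp add: algebra_simps)
  also have Sx: "\<mu> * \<phi> (exp t) powr (2*q+1) + \<beta> * \<phi> (exp t) powr q * \<zeta> (exp t) powr (q+1) = - (\<phi>2 (exp t) + (Nr - 1) / exp t * \<phi>1 (exp t))"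
    using E[OF e0] by linarith
  also have "exp (m*t) * exp t * exp t * (- (\<phi>2 (exp t) + (Nr - 1) / exp t * \<phi>1 (exp t)))
     = - (exp (m*t) * exp t * exp t * \<phi>2 (exp t)) - exp (m*t) * exp t * (Nr - 1) * \<phi>1 (exp t)"
    by (simp add: field_simps)
  finally show "exp (m*t) * (m*m * \<phi> (exp t) + (2*m+1) * exp t * \<phi>1 (exp t) + exp t * exp t * \<phi>2 (exp t))
      + (Nr - 2 - 2*m) * (exp (m*t) * (m * \<phi> (exp t) + exp t * \<phi>1 (exp t)))
      - m * (Nr - 2 - m) * (exp (m*t) * \<phi> (exp t))
      + \<mu> * (exp (m*t) * \<phi> (exp t)) powr (2*q+1)
      + \<beta> * (exp (m*t) * \<phi> (exp t)) powr q * (exp (m*t) * \<zeta> (exp t)) powr (q+1) = 0"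
    by (simp add: field_simps)
qed



lemma psi_deriv_gen:
  fixes W V D E D2 E2 :: "real \<Rightarrow> real" and \<tau> \<sigma> \<mu>1 \<mu>2 \<beta> p q :: real
  assumes dW: "\<And>t. (W has_real_derivative D t) (at t)" and dV: "\<And>t. (V has_real_derivative E t) (at t)"
    and dD: "(D has_real_derivative D2 t) (at t)" and dE: "(E has_real_derivative E2 t) (at t)"
    and nnW: "\<And>s. W s \<ge> 0" and nnV: "\<And>s. V s \<ge> 0" and q: "q > 0" and pq: "p = 2*q+1"
    and odeW: "D2 t + \<tau> * D t - \<sigma> * W t + \<mu>1 * W t powr (2*q+1) + \<beta> * W t powr q * V t powr (q+1) = 0"
    and odeV: "E2 t + \<tau> * E t - \<sigma> * V t + \<mu>2 * V t powr (2*q+1) + \<beta> * V t powr q * W t powr (q+1) = 0"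
  shows "((\<lambda>t. 1/2 * ((D t)\<^sup>2 + (E t)\<^sup>2 - \<sigma> * ((W t)\<^sup>2 + (V t)\<^sup>2))
     + 1 / (p + 1) * (\<mu>1 * W t powr (p + 1) + 2 * \<beta> * W t powr (q + 1) * V t powr (q + 1)
                     + \<mu>2 * V t powr (p + 1))) has_real_derivative (- \<tau> * ((D t)\<^sup>2 + (E t)\<^sup>2))) (at t)"
proof -
  have a1: "p + 1 > 1" "q + 1 > 1" using q pq by auto
  note PW1 = DERIV_powr_nonneg[OF a1(1) dW nnW] and PW2 = DERIV_powr_nonneg[OF a1(2) dW nnW]
  note PV1 = DERIV_powr_nonneg[OF a1(1) dV nnV] and PV2 = DERIV_powr_nonneg[OF a1(2) dV nnV]
  let ?A = "1/2 * (2 * D t * D2 t + 2 * E t * E2 t - \<sigma> * (2 * W t * D t + 2 * V t * E t))"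
  let ?B = "1 / (p + 1) * (\<mu>1 * ((p + 1) * W t powr (p + 1 - 1) * D t)
        + 2 * \<beta> * (((q + 1) * W t powr (q + 1 - 1) * D t) * V t powr (q + 1) + W t powr (q + 1) * ((q + 1) * V t powr (q + 1 - 1) * E t))
        + \<mu>2 * ((p + 1) * V t powr (p + 1 - 1) * E t))"
  have der: "((\<lambda>t. 1/2 * ((D t)\<^sup>2 + (E t)\<^sup>2 - \<sigma> * ((W t)\<^sup>2 + (V t)\<^sup>2))
     + 1 / (p + 1) * (\<mu>1 * W t powr (p + 1) + 2 * \<beta> * W t powr (q + 1) * V t powr (q + 1)
                     + \<mu>2 * V t powr (p + 1))) has_real_derivative ?A + ?B) (at t)"
  proof -
    have sq: "((\<lambda>t. (f t)\<^sup>2) has_real_derivative 2 * f t * f' ) (at t)" if "(f has_real_derivative f') (at t)" for f :: "real \<Rightarrow> real" and f'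
      using DERIV_power[OF that, of 2] by (simp add: algebra_simps)
    have T1: "((\<lambda>t. (D t)\<^sup>2 + (E t)\<^sup>2 - \<sigma> * ((W t)\<^sup>2 + (V t)\<^sup>2)) has_real_derivative
        (2 * D t * D2 t + 2 * E t * E2 t - \<sigma> * (2 * W t * D t + 2 * V t * E t))) (at t)"
      by (intro DERIV_diff DERIV_add DERIV_cmult sq dW dV dD dE)
    have T2: "((\<lambda>t. \<mu>1 * W t powr (p + 1) + 2 * \<beta> * W t powr (q + 1) * V t powr (q + 1) + \<mu>2 * V t powr (p + 1))
       has_real_derivative (\<mu>1 * ((p + 1) * W t powr (p + 1 - 1) * D t)
        + (2 * \<beta> * ((q + 1) * W t powr (q + 1 - 1) * D t) * V t powr (q + 1) + ((q + 1) * V t powr (q + 1 - 1) * E t) * (2 * \<beta> * W t powr (q + 1)))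
        + \<mu>2 * ((p + 1) * V t powr (p + 1 - 1) * E t))) (at t)"
      by (intro DERIV_add DERIV_cmult DERIV_mult PW1 PW2 PV1 PV2)
    show ?thesis
      by (rule DERIV_cong[OF DERIV_add[OF DERIV_cmult[OF T1, of "1/2"] DERIV_cmult[OF T2, of "1/(p+1)"]]])
         (simp add: algebra_simps)
  qed
  have "?A + ?B = D t * (D2 t - \<sigma> * W t + \<mu>1 * W t powr (2*q+1) + \<beta> * W t powr q * V t powr (q+1))
               + E t * (E2 t - \<sigma> * V t + \<mu>2 * V t powr (2*q+1) + \<beta> * V t powr q * W t powr (q+1))"
    using q unfolding pq by (simp add: field_simps)
  also have "\<dots> = - \<tau> * ((D t)\<^sup>2 + (E t)\<^sup>2)"
  proof -
    have "D2 t - \<sigma> * W t + \<mu>1 * W t powr (2*q+1) + \<beta> * W t powr q * V t powr (q+1) = - \<tau> * D t" using odeW by linarith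
    moreover have "E2 t - \<sigma> * V t + \<mu>2 * V t powr (2*q+1) + \<beta> * V t powr q * W t powr (q+1) = - \<tau> * E t" using odeV by linarith
    ultimately show ?thesis by (simp add: power2_eq_square) (simp add: algebra_simps)
  qed
  finally show ?thesis using der by simp
qed



lemma prof_facts:
  fixes u v :: "real^'n::finite \<Rightarrow> real"
  assumes C2: "C2_on (-{0}) u" and rad: "radial u"
    and eq: "\<And>x. x \<noteq> 0 \<Longrightarrow> - laplacian u x = \<mu> * u x powr (2*q+1) + \<beta> * u x powr q * v x powr (q+1)"
    and nn: "\<And>x. x \<noteq> 0 \<Longrightarrow> u x \<ge> 0"
  shows "\<And>r. r \<noteq> 0 \<Longrightarrow> (prof k u has_real_derivative prof k (partial k u) r) (at r)"
    "\<And>r. r \<noteq> 0 \<Longrightarrow> (prof k (partial k u) has_real_derivative prof k (partial k (partial k u)) r) (at r)"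
    "\<And>r. r > 0 \<Longrightarrow> prof k (partial k (partial k u)) r = - ((real CARD('n) - 1) / r * prof k (partial k u) r)
        - (\<mu> * prof k u r powr (2*q+1) + \<beta> * prof k u r powr q * prof k v r powr (q+1))"
    "\<And>r. r > 0 \<Longrightarrow> prof k u r \<ge> 0"
proof -
  fix r :: real assume r: "r \<noteq> 0"
  then have x: "r *\<^sub>R axis k (1::real) \<in> -{0}" by (simp add: axis_eq_0_iff)
  show "(prof k u has_real_derivative prof k (partial k u) r) (at r)"
    using prof_deriv_gen[OF C2_onD(1)[OF C2 x]] by (simp add: prof_def)
  show "(prof k (partial k u) has_real_derivative prof k (partial k (partial k u)) r) (at r)"
    using prof_deriv_gen[OF C2_onD(2)[OF C2 x, of k k]] by (simp add: prof_def)
next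
  fix r :: real assume r: "r > 0"
  define x where "x = r *\<^sub>R axis k (1::real)"
  have x0: "x \<noteq> 0" unfolding x_def using r by (simp add: axis_eq_0_iff)
  have nx: "norm x = r" unfolding x_def using r by (simp add: norm_axis_1)
  have "laplacian u x = prof k (partial k (partial k u)) r + (real CARD('n) - 1) / r * prof k (partial k u) r"
    using radial_laplacian[OF C2 rad x0, of k] nx by simp
  moreover have "u x = prof k u r" "v x = prof k v r" unfolding x_def prof_def by auto
  ultimately have "- (prof k (partial k (partial k u)) r + (real CARD('n) - 1) / r * prof k (partial k u) r)
     = \<mu> * prof k u r powr (2*q+1) + \<beta> * prof k u r powr q * prof k v r powr (q+1)"
    using eq[OF x0] by metis
  then show "prof k (partial k (partial k u)) r = - ((real CARD('n) - 1) / r * prof k (partial k u) r)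
        - (\<mu> * prof k u r powr (2*q+1) + \<beta> * prof k u r powr q * prof k v r powr (q+1))"
    by linarith
  show "prof k u r \<ge> 0" using nn[OF x0] unfolding x_def prof_def by simp
qed

lemma wbar_eq:
  fixes u :: "real^'n::finite \<Rightarrow> real"
  assumes rad: "radial u" and e: "norm e = 1"
  shows "wbar e p u = (\<lambda>t. exp ((real CARD('n) - 2 - delta0 (real CARD('n)) p) * t) * prof k u (exp t))"
proof
  fix t
  have ne: "norm (exp (- t) *\<^sub>R e) = exp (- t)" using e by simp
  have sc: "(1 / (norm (exp (- t) *\<^sub>R e))\<^sup>2) *\<^sub>R (exp (- t) *\<^sub>R e) = exp t *\<^sub>R e"
    unfolding ne by (simp add: power2_eq_square exp_minus field_simps)
  have ue: "u (exp t *\<^sub>R e) = prof k u (exp t)"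
  proof -
    have "e \<noteq> 0" using e by auto
    then show ?thesis using radial_prof[OF rad, of "exp t *\<^sub>R e" k] e by simp
  qed
  have "exp (- t) powr (2 - real CARD('n)) = exp (- t * (2 - real CARD('n)))" by (simp add: exp_powr_real)
  then show "wbar e p u t = exp ((real CARD('n) - 2 - delta0 (real CARD('n)) p) * t) * prof k u (exp t)"
  proof -
    have ee: "exp (- t) / (exp (- t))\<^sup>2 = exp t" by (simp add: power2_eq_square exp_minus field_simps)
    show ?thesis unfolding wbar_def kelvin_def ne using \<open>exp (- t) powr _ = _\<close> ue
      by (simp add: ee exp_add[symmetric] algebra_simps)
  qed
qed

lemma W_bound:
  fixes \<phi> \<phi>1 \<phi>2 \<zeta> :: "real \<Rightarrow> real" and n :: nat
  assumes D0: "\<And>r. r > 0 \<Longrightarrow> (\<phi> has_real_derivative \<phi>1 r) (at r)"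
    and D1: "\<And>r. r > 0 \<Longrightarrow> (\<phi>1 has_real_derivative \<phi>2 r) (at r)"
    and E: "\<And>r. r > 0 \<Longrightarrow> \<phi>2 r = - ((real n - 1) / r * \<phi>1 r) - (\<mu> * \<phi> r powr (2*q+1) + \<beta> * \<phi> r powr q * \<zeta> r powr (q+1))"
    and nn: "\<And>r. r > 0 \<Longrightarrow> \<phi> r \<ge> 0" and nnz: "\<And>r. r > 0 \<Longrightarrow> \<zeta> r \<ge> 0"
    and mu: "\<mu> > 0" and b: "\<beta> > 0" and q: "q > 0" and n: "n \<ge> 3"
  shows "\<exists>B. \<forall>t. exp (2 / (2*q) * t) * \<phi> (exp t) \<le> B"
proof -
  define F where "F r = \<mu> * \<phi> r powr (2*q+1) + \<beta> * \<phi> r powr q * \<zeta> r powr (q+1)" for r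
  interpret bnd \<phi> \<phi>1 F n \<mu> "2*q+1"
  proof
    show "1 < 2*q+1" using q by simp
    show "\<mu> > 0" by fact
    show "1 \<le> n" using n by simp
    show "\<And>r. r > 0 \<Longrightarrow> (\<phi> has_real_derivative \<phi>1 r) (at r)" by (rule D0)
    show "\<And>r. r > 0 \<Longrightarrow> \<phi> r \<ge> 0" by (rule nn)
    show "\<And>r. r > 0 \<Longrightarrow> F r \<ge> \<mu> * \<phi> r powr (2*q+1)"
      unfolding F_def using b by simp
  next
    fix r :: real assume r: "r > 0"
    have d: "((\<lambda>s. s^(n-1) * \<phi>1 s) has_real_derivative real (n-1) * r^(n-1-1) * \<phi>1 r + r^(n-1) * \<phi>2 r) (at r)"
      using DERIV_mult[OF DERIV_pow D1[OF r], of "n-1"] by (rule DERIV_cong) (simp add: mult.commute)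
    have rr: "r^(n-1) = r * r^(n-1-1)" using n by (simp add: power_eq_if)
    have "real (n-1) = real n - 1" using n by simp
    then have "real (n-1) * r^(n-1-1) * \<phi>1 r + r^(n-1) * \<phi>2 r = - (r^(n-1) * F r)"
      unfolding F_def E[OF r] rr using r by (simp add: field_simps)
    then show "((\<lambda>s. s^(n-1) * \<phi>1 s) has_real_derivative - (r^(n-1) * F r)) (at r)" using d by simp
  qed
  obtain B where B: "\<And>r. r > 0 \<Longrightarrow> r powr (2/((2*q+1)-1)) * \<phi> r \<le> B" using bound by blast
  have "exp (2 / (2*q) * t) * \<phi> (exp t) \<le> B" for t
    using B[of "exp t"] by (simp add: exp_powr_real mult.commute)
  then show ?thesis by blast
qed

lemma fin_bound:
  fixes Yv Ymv a A b B s S :: real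
  assumes "0 \<le> Yv" "Yv \<le> Ymv" "a \<le> A" "b \<le> B" "s \<le> S" "- s \<le> S" "0 \<le> a" "0 \<le> b" "0 \<le> A" "0 \<le> B"
  shows "\<bar>1/2 * (a + b - s) + Yv\<bar> \<le> 1/2 * (A + B) + 1/2 * S + Ymv"
proof -
  have "1/2 * (a + b - s) + Yv \<le> 1/2 * (A + B) + 1/2 * S + Ymv" using assms by (simp add: field_simps)
  moreover have "- (1/2 * (a + b - s) + Yv) \<le> 1/2 * (A + B) + 1/2 * S + Ymv" using assms by (simp add: field_simps)
  ultimately show ?thesis by (simp only: abs_le_iff)
qed

theorem lemma4p5:
  fixes u v :: "real^'n \<Rightarrow> real" and e :: "real^'n"
    and \<mu>1 \<mu>2 \<beta> p q :: real
  defines "N \<equiv> real CARD('n)"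
  defines "w1 \<equiv> wbar e p u" and "w2 \<equiv> wbar e p v"
  assumes n3: "CARD('n) \<ge> 3"
    and pos: "\<mu>1 > 0" "\<mu>2 > 0" "\<beta> > 0"
    and pq: "p = 2 * q + 1"
    and prange: "N / (N - 2) < p" "p < (N + 2) / (N - 2)"
    and sol: "solves_S \<mu>1 \<mu>2 \<beta> q u v"
    and rad: "radial u" "radial v"
    and e: "norm e = 1"
  shows "(\<forall>t. w1 differentiable (at t) \<and> w2 differentiable (at t)
            \<and> deriv w1 differentiable (at t) \<and> deriv w2 differentiable (at t)
            \<and> deriv (deriv w1) t + tau0 N p * deriv w1 t - sigma0 N p * w1 t
                + \<mu>1 * w1 t powr (2*q+1) + \<beta> * w1 t powr q * w2 t powr (q+1) = 0
            \<and> deriv (deriv w2) t + tau0 N p * deriv w2 t - sigma0 N p * w2 t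
                + \<mu>2 * w2 t powr (2*q+1) + \<beta> * w2 t powr q * w1 t powr (q+1) = 0)
       \<and> mono (Psi_bar N p q \<mu>1 \<mu>2 \<beta> w1 w2)
       \<and> (\<exists>C. \<forall>t. \<bar>Psi_bar N p q \<mu>1 \<mu>2 \<beta> w1 w2 t\<bar> \<le> C)
       \<and> (\<forall>t. (Psi_bar N p q \<mu>1 \<mu>2 \<beta> w1 w2 has_real_derivative
                 (- tau0 N p * ((deriv w1 t)\<^sup>2 + (deriv w2 t)\<^sup>2))) (at t))"
proof -
  obtain k :: 'n where True by simp
  have N3: "N \<ge> 3" unfolding N_def using n3 by simp
  have p1: "p > 1"
  proof -
    have "N / (N - 2) > 1" using N3 by (simp add: field_simps)
    then show ?thesis using prange(1) by linarith
  qed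
  have q0: "q > 0" using p1 pq by simp
  define m where "m = 2 / (p - 1)"
  have m0: "m > 0" unfolding m_def using p1 by simp
  have mp: "m * (2*q+1) = m + 2" unfolding m_def using p1 pq by (simp add: field_simps)
  have delta: "delta0 N p = N - 2 - m"
    unfolding delta0_def alpha0_def m_def using p1 by (simp add: field_simps)
  have tau: "tau0 N p = N - 2 - 2*m"
  proof -
    have a: "tau0 N p = ((N + 2 + 2 * alpha0 N p) - p * (N - 2)) / (p - 1)"
    proof -
      have "N - 2 \<noteq> 0" using N3 by simp
      then have "(N + 2 + 2 * alpha0 N p) / (N - 2) - p = ((N + 2 + 2 * alpha0 N p) - p * (N - 2)) / (N - 2)"
        by (simp add: field_simps)
      then show ?thesis unfolding tau0_def using \<open>N - 2 \<noteq> 0\<close> by simp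
    qed
    have b: "(N + 2 + 2 * alpha0 N p) - p * (N - 2) = (N - 2) * (p - 1) - 4"
      unfolding alpha0_def by (simp add: algebra_simps)
    show ?thesis unfolding a b m_def using p1 by (simp add: field_simps)
  qed
  have sigma: "sigma0 N p = m * (N - 2 - m)"
  proof -
    have n2: "N - 2 \<noteq> 0" "p - 1 \<noteq> 0" using N3 p1 by auto
    have s1: "p - (N + alpha0 N p) / (N - 2) = 2 / (N - 2)"
      using n2 unfolding alpha0_def by (simp add: field_simps)
    have s2: "2 + alpha0 N p = (N - 2) * (p - 1) - 2" unfolding alpha0_def by (simp add: algebra_simps)
    have "sigma0 N p = 2 * ((N - 2) * (p - 1) - 2) / (p - 1)^2"
      unfolding sigma0_def s1 s2 using n2 by (simp add: field_simps)
    also have "\<dots> = m * (N - 2 - m)" unfolding m_def using n2 by (simp add: field_simps power2_eq_square)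
    finally show ?thesis .
  qed
  have tneg: "tau0 N p < 0"
  proof -
    have "p * (N - 2) < N + 2" using prange(2) N3 by (simp add: field_simps)
    then have "(N - 2) * (p - 1) < 4" by (simp add: algebra_simps)
    then have "N - 2 < 4 / (p - 1)" using p1 by (simp add: pos_less_divide_eq)
    then show ?thesis unfolding tau m_def by simp
  qed

  have C2u: "C2_on (-{0}) u" and C2v: "C2_on (-{0}) v"
    and nnu: "\<And>x. x \<noteq> 0 \<Longrightarrow> u x \<ge> 0" and nnv: "\<And>x. x \<noteq> 0 \<Longrightarrow> v x \<ge> 0"
    and equ: "\<And>x. x \<noteq> 0 \<Longrightarrow> - laplacian u x = \<mu>1 * u x powr (2*q+1) + \<beta> * u x powr q * v x powr (q+1)"
    and eqv: "\<And>x. x \<noteq> 0 \<Longrightarrow> - laplacian v x = \<mu>2 * v x powr (2*q+1) + \<beta> * v x powr q * u x powr (q+1)"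
    using sol unfolding solves_S_def by auto
  note PU = prof_facts[OF C2u rad(1) equ nnu, where k=k]
  note PV = prof_facts[OF C2v rad(2) eqv nnv, where k=k]
  define \<phi> where "\<phi> = prof k u"
  define \<phi>1 where "\<phi>1 = prof k (partial k u)"
  define \<phi>2 where "\<phi>2 = prof k (partial k (partial k u))"
  define \<zeta> where "\<zeta> = prof k v"
  define \<zeta>1 where "\<zeta>1 = prof k (partial k v)"
  define \<zeta>2 where "\<zeta>2 = prof k (partial k (partial k v))"
  have du0: "\<And>r. r > 0 \<Longrightarrow> (\<phi> has_real_derivative \<phi>1 r) (at r)" using PU(1) unfolding \<phi>_def \<phi>1_def by simp
  have du1: "\<And>r. r > 0 \<Longrightarrow> (\<phi>1 has_real_derivative \<phi>2 r) (at r)" using PU(2) unfolding \<phi>2_def \<phi>1_def by simp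
  have eu: "\<And>r. r > 0 \<Longrightarrow> \<phi>2 r = - ((real CARD('n) - 1) / r * \<phi>1 r) - (\<mu>1 * \<phi> r powr (2*q+1) + \<beta> * \<phi> r powr q * \<zeta> r powr (q+1))"
    using PU(3) unfolding \<phi>_def \<phi>1_def \<phi>2_def \<zeta>_def by simp
  have nu: "\<And>r. r > 0 \<Longrightarrow> \<phi> r \<ge> 0" using PU(4) unfolding \<phi>_def by simp
  have dv0: "\<And>r. r > 0 \<Longrightarrow> (\<zeta> has_real_derivative \<zeta>1 r) (at r)" using PV(1) unfolding \<zeta>_def \<zeta>1_def by simp
  have dv1: "\<And>r. r > 0 \<Longrightarrow> (\<zeta>1 has_real_derivative \<zeta>2 r) (at r)" using PV(2) unfolding \<zeta>2_def \<zeta>1_def by simp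
  have ev: "\<And>r. r > 0 \<Longrightarrow> \<zeta>2 r = - ((real CARD('n) - 1) / r * \<zeta>1 r) - (\<mu>2 * \<zeta> r powr (2*q+1) + \<beta> * \<zeta> r powr q * \<phi> r powr (q+1))"
    using PV(3) unfolding \<phi>_def \<zeta>1_def \<zeta>2_def \<zeta>_def by simp
  have nv: "\<And>r. r > 0 \<Longrightarrow> \<zeta> r \<ge> 0" using PV(4) unfolding \<zeta>_def by simp
  have w1eq: "w1 = (\<lambda>t. exp (m*t) * \<phi> (exp t))"
    unfolding w1_def wbar_eq[OF rad(1) e, where p=p and k=k] \<phi>_def using delta unfolding N_def by simp
  have w2eq: "w2 = (\<lambda>t. exp (m*t) * \<zeta> (exp t))"
    unfolding w2_def wbar_eq[OF rad(2) e, where p=p and k=k] \<zeta>_def using delta unfolding N_def by simp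
  define Du where "Du t = exp (m*t) * (m * \<phi> (exp t) + exp t * \<phi>1 (exp t))" for t
  define D2u where "D2u t = exp (m*t) * (m*m * \<phi> (exp t) + (2*m+1) * exp t * \<phi>1 (exp t) + exp t * exp t * \<phi>2 (exp t))" for t
  define Dv where "Dv t = exp (m*t) * (m * \<zeta> (exp t) + exp t * \<zeta>1 (exp t))" for t
  define D2v where "D2v t = exp (m*t) * (m*m * \<zeta> (exp t) + (2*m+1) * exp t * \<zeta>1 (exp t) + exp t * exp t * \<zeta>2 (exp t))" for t
  note OU = ode_transform[OF du0 du1 eu mp]
  note OV = ode_transform[OF dv0 dv1 ev mp]
  have dw1: "\<And>t. (w1 has_real_derivative Du t) (at t)" using OU(1) unfolding w1eq Du_def .
  have dDu: "\<And>t. (Du has_real_derivative D2u t) (at t)" using OU(2) unfolding Du_def[abs_def] D2u_def .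
  have dw2: "\<And>t. (w2 has_real_derivative Dv t) (at t)" using OV(1) unfolding w2eq Dv_def .
  have dDv: "\<And>t. (Dv has_real_derivative D2v t) (at t)" using OV(2) unfolding Dv_def[abs_def] D2v_def .
  have odeu: "\<And>t. D2u t + tau0 N p * Du t - sigma0 N p * w1 t + \<mu>1 * w1 t powr (2*q+1) + \<beta> * w1 t powr q * w2 t powr (q+1) = 0"
    unfolding tau sigma w1eq w2eq Du_def D2u_def using OU(3) by (simp add: N_def)
  have odev: "\<And>t. D2v t + tau0 N p * Dv t - sigma0 N p * w2 t + \<mu>2 * w2 t powr (2*q+1) + \<beta> * w2 t powr q * w1 t powr (q+1) = 0"
    unfolding tau sigma w1eq w2eq Dv_def D2v_def using OV(3) by (simp add: N_def)
  have dw1eq: "deriv w1 = Du" by (rule ext) (rule DERIV_imp_deriv[OF dw1])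
  have dw2eq: "deriv w2 = Dv" by (rule ext) (rule DERIV_imp_deriv[OF dw2])
  have ddw1: "deriv (deriv w1) t = D2u t" for t using DERIV_imp_deriv[OF dDu] dw1eq by simp
  have ddw2: "deriv (deriv w2) t = D2v t" for t using DERIV_imp_deriv[OF dDv] dw2eq by simp
  have part1: "\<forall>t. w1 differentiable (at t) \<and> w2 differentiable (at t)
            \<and> deriv w1 differentiable (at t) \<and> deriv w2 differentiable (at t)
            \<and> deriv (deriv w1) t + tau0 N p * deriv w1 t - sigma0 N p * w1 t
                + \<mu>1 * w1 t powr (2*q+1) + \<beta> * w1 t powr q * w2 t powr (q+1) = 0
            \<and> deriv (deriv w2) t + tau0 N p * deriv w2 t - sigma0 N p * w2 t
                + \<mu>2 * w2 t powr (2*q+1) + \<beta> * w2 t powr q * w1 t powr (q+1) = 0"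
  proof -
    have "deriv Du t = D2u t" "deriv Dv t = D2v t" for t using DERIV_imp_deriv[OF dDu] DERIV_imp_deriv[OF dDv] by auto
    then show ?thesis unfolding real_differentiable_def dw1eq dw2eq using dw1 dw2 dDu dDv odeu odev by metis
  qed
  have nnw1: "\<And>s. w1 s \<ge> 0" unfolding w1eq using nu by simp
  have nnw2: "\<And>s. w2 s \<ge> 0" unfolding w2eq using nv by simp
  have PsiEq: "Psi_bar N p q \<mu>1 \<mu>2 \<beta> w1 w2 = (\<lambda>t. 1/2 * ((Du t)\<^sup>2 + (Dv t)\<^sup>2 - sigma0 N p * ((w1 t)\<^sup>2 + (w2 t)\<^sup>2))
     + 1 / (p + 1) * (\<mu>1 * w1 t powr (p + 1) + 2 * \<beta> * w1 t powr (q + 1) * w2 t powr (q + 1)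
                     + \<mu>2 * w2 t powr (p + 1)))"
    by (rule ext) (simp add: Psi_bar_def dw1eq dw2eq)
  have Pd: "\<And>t. (Psi_bar N p q \<mu>1 \<mu>2 \<beta> w1 w2 has_real_derivative
                 (- tau0 N p * ((deriv w1 t)\<^sup>2 + (deriv w2 t)\<^sup>2))) (at t)"
    unfolding PsiEq dw1eq dw2eq by (rule psi_deriv_gen[OF dw1 dw2 dDu dDv nnw1 nnw2 q0 pq odeu odev])
  have mono: "mono (Psi_bar N p q \<mu>1 \<mu>2 \<beta> w1 w2)"
  proof (rule monoI)
    fix a b :: real assume "a \<le> b"
    then show "Psi_bar N p q \<mu>1 \<mu>2 \<beta> w1 w2 a \<le> Psi_bar N p q \<mu>1 \<mu>2 \<beta> w1 w2 b"
    proof (rule DERIV_nonneg_imp_nondecreasing)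
      fix x
      have "- tau0 N p * ((deriv w1 x)\<^sup>2 + (deriv w2 x)\<^sup>2) \<ge> 0" using tneg by (simp add: mult_nonpos_nonneg)
      then show "\<exists>y. (Psi_bar N p q \<mu>1 \<mu>2 \<beta> w1 w2 has_real_derivative y) (at x) \<and> y \<ge> 0" using Pd by blast
    qed
  qed
  have bounded: "\<exists>C. \<forall>t. \<bar>Psi_bar N p q \<mu>1 \<mu>2 \<beta> w1 w2 t\<bar> \<le> C"
  proof -
    have mq: "2 / (2*q) = m" unfolding m_def pq by simp
    obtain Bu where Bu: "\<And>t. exp (2 / (2*q) * t) * \<phi> (exp t) \<le> Bu"
      using W_bound[OF du0 du1 eu nu nv pos(1) pos(3) q0 n3] by blast
    obtain Bv where Bv: "\<And>t. exp (2 / (2*q) * t) * \<zeta> (exp t) \<le> Bv"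
      using W_bound[OF dv0 dv1 ev nv nu pos(2) pos(3) q0 n3] by blast
    have w1le: "\<And>t. w1 t \<le> Bu" using Bu unfolding w1eq mq .
    have w2le: "\<And>t. w2 t \<le> Bv" using Bv unfolding w2eq mq .
    have Bu0: "Bu \<ge> 0" using w1le[of 0] nnw1[of 0] by linarith
    have Bv0: "Bv \<ge> 0" using w2le[of 0] nnw2[of 0] by linarith
    define kk where "kk = - tau0 N p"
    have kk: "kk > 0" unfolding kk_def using tneg by simp
    define \<sigma> where "\<sigma> = sigma0 N p"
    have pb: "x powr a \<le> B powr a" if "0 \<le> x" "x \<le> B" "a \<ge> 0" for x B a :: real
      using powr_mono2[OF that(3,1,2)] .
    have hgen: "\<bar>Z t - kk * D t\<bar> \<le> \<bar>\<sigma>\<bar> * Ba + \<mu> * Ba powr (2*q+1) + \<beta> * Ba powr q * Bb powr (q+1)"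
      if ode: "Z t + tau0 N p * D t - sigma0 N p * X t + \<mu> * X t powr (2*q+1) + \<beta> * X t powr q * Y t powr (q+1) = 0"
        and x: "0 \<le> X t" "X t \<le> Ba" and y: "0 \<le> Y t" "Y t \<le> Bb" and mu: "\<mu> > 0"
      for Z D X Y :: "real \<Rightarrow> real" and t Ba Bb \<mu>
    proof -
      have e1: "Z t - kk * D t = \<sigma> * X t - (\<mu> * X t powr (2*q+1) + \<beta> * X t powr q * Y t powr (q+1))"
        using ode unfolding kk_def \<sigma>_def by linarith
      have A: "0 \<le> \<mu> * X t powr (2*q+1) + \<beta> * X t powr q * Y t powr (q+1)" using mu pos(3) by simp
      have B: "\<mu> * X t powr (2*q+1) + \<beta> * X t powr q * Y t powr (q+1) \<le> \<mu> * Ba powr (2*q+1) + \<beta> * Ba powr q * Bb powr (q+1)"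
      proof -
        have "X t powr (2*q+1) \<le> Ba powr (2*q+1)" using pb x q0 by simp
        moreover have "X t powr q * Y t powr (q+1) \<le> Ba powr q * Bb powr (q+1)"
          using pb x y q0 by (intro mult_mono) auto
        ultimately show ?thesis using mu pos(3) by (intro add_mono mult_left_mono) auto
      qed
      have C: "\<bar>\<sigma> * X t\<bar> \<le> \<bar>\<sigma>\<bar> * Ba" using x by (simp add: abs_mult mult_left_mono)
      show ?thesis unfolding e1 using A B C by linarith
    qed
    define Mu where "Mu = \<bar>\<sigma>\<bar> * Bu + \<mu>1 * Bu powr (2*q+1) + \<beta> * Bu powr q * Bv powr (q+1)"
    define Mv where "Mv = \<bar>\<sigma>\<bar> * Bv + \<mu>2 * Bv powr (2*q+1) + \<beta> * Bv powr q * Bu powr (q+1)"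
    have hu: "\<And>t. \<bar>D2u t - kk * Du t\<bar> \<le> Mu" unfolding Mu_def
      by (rule hgen[where Z=D2u and D=Du and X=w1 and Y=w2 and \<mu>=\<mu>1]) (use odeu nnw1 w1le nnw2 w2le pos in auto)
    have hv: "\<And>t. \<bar>D2v t - kk * Dv t\<bar> \<le> Mv" unfolding Mv_def
      by (rule hgen[where Z=D2v and D=Dv and X=w2 and Y=w1 and \<mu>=\<mu>2]) (use odev nnw1 w1le nnw2 w2le pos in auto)
    have Dule: "\<And>t. \<bar>Du t\<bar> \<le> Mu / kk" by (rule deriv_bound[OF kk dw1 dDu hu nnw1 w1le])
    have Dvle: "\<And>t. \<bar>Dv t\<bar> \<le> Mv / kk" by (rule deriv_bound[OF kk dw2 dDv hv nnw2 w2le])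
    define Ym where "Ym = \<mu>1 * Bu powr (p + 1) + 2 * \<beta> * Bu powr (q + 1) * Bv powr (q + 1) + \<mu>2 * Bv powr (p + 1)"
    define C where "C = 1/2 * ((Mu/kk)\<^sup>2 + (Mv/kk)\<^sup>2) + 1/2 * (\<bar>\<sigma>\<bar> * (Bu\<^sup>2 + Bv\<^sup>2)) + 1 / (p + 1) * Ym"
    show ?thesis
    proof (intro exI allI)
      fix t
      let ?Y = "\<mu>1 * w1 t powr (p + 1) + 2 * \<beta> * w1 t powr (q + 1) * w2 t powr (q + 1) + \<mu>2 * w2 t powr (p + 1)"
      have Y0: "0 \<le> ?Y" using pos by simp
      have Y1: "?Y \<le> Ym" unfolding Ym_def
      proof -
        have a: "w1 t powr (p + 1) \<le> Bu powr (p + 1)" using pb nnw1 w1le p1 by simp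
        have b: "w2 t powr (p + 1) \<le> Bv powr (p + 1)" using pb nnw2 w2le p1 by simp
        have c: "w1 t powr (q + 1) * w2 t powr (q + 1) \<le> Bu powr (q + 1) * Bv powr (q + 1)"
          using pb nnw1 w1le nnw2 w2le q0 by (intro mult_mono) auto
        show "?Y \<le> \<mu>1 * Bu powr (p + 1) + 2 * \<beta> * Bu powr (q + 1) * Bv powr (q + 1) + \<mu>2 * Bv powr (p + 1)"
        proof -
          have "2 * \<beta> \<ge> 0" using pos by simp
          from mult_left_mono[OF a less_imp_le[OF pos(1)]] mult_left_mono[OF b less_imp_le[OF pos(2)]] mult_left_mono[OF c this]
          show ?thesis by (simp add: mult.assoc)
        qed
      qed
      have p1': "p + 1 > 0" using p1 by simp
      have Yb: "0 \<le> 1/(p+1) * ?Y" "1/(p+1) * ?Y \<le> 1/(p+1) * Ym"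
        using Y0 Y1 p1' by (auto intro: divide_right_mono)
      have sq: "a\<^sup>2 \<le> B\<^sup>2" if "\<bar>a\<bar> \<le> B" for a B :: real
        using power_mono[OF that abs_ge_zero, of 2] by simp
      have d1: "(Du t)\<^sup>2 \<le> (Mu/kk)\<^sup>2" by (rule sq[OF Dule])
      have d2: "(Dv t)\<^sup>2 \<le> (Mv/kk)\<^sup>2" by (rule sq[OF Dvle])
      have x1: "(w1 t)\<^sup>2 \<le> Bu\<^sup>2" using sq[of "w1 t" Bu] nnw1 w1le by simp
      have x2: "(w2 t)\<^sup>2 \<le> Bv\<^sup>2" using sq[of "w2 t" Bv] nnw2 w2le by simp
      have sx: "\<bar>\<sigma> * ((w1 t)\<^sup>2 + (w2 t)\<^sup>2)\<bar> \<le> \<bar>\<sigma>\<bar> * (Bu\<^sup>2 + Bv\<^sup>2)"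
        using x1 x2 by (simp add: abs_mult mult_left_mono)
      have PE: "Psi_bar N p q \<mu>1 \<mu>2 \<beta> w1 w2 t = 1/2 * ((Du t)\<^sup>2 + (Dv t)\<^sup>2 - \<sigma> * ((w1 t)\<^sup>2 + (w2 t)\<^sup>2)) + 1/(p+1) * ?Y"
        unfolding PsiEq \<sigma>_def by simp
      have z: "0 \<le> (Du t)\<^sup>2" "0 \<le> (Dv t)\<^sup>2" "0 \<le> (Mu/kk)\<^sup>2" "0 \<le> (Mv/kk)\<^sup>2" by simp_all
      have sx2: "\<sigma> * ((w1 t)\<^sup>2 + (w2 t)\<^sup>2) \<le> \<bar>\<sigma>\<bar> * (Bu\<^sup>2 + Bv\<^sup>2)"
         "- (\<sigma> * ((w1 t)\<^sup>2 + (w2 t)\<^sup>2)) \<le> \<bar>\<sigma>\<bar> * (Bu\<^sup>2 + Bv\<^sup>2)" using sx by linarith+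
      show "\<bar>Psi_bar N p q \<mu>1 \<mu>2 \<beta> w1 w2 t\<bar> \<le> C"
        unfolding PE C_def by (rule fin_bound[OF Yb d1 d2 sx2 z])
    qed
  qed
  show ?thesis using part1 mono bounded Pd by blast
qed

end
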